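(* Let $q,n,d$ be positive integers with $q\ge2$ and $qd=(q-1)n$. Then for every code $C\subseteq[q]^n$ with $|C|=qn-1$ and minimum Hamming distance at least $d$, there exists $u\in[q]^n\setminus C$ such that $C\cup\{u\}$ has minimum Hamming distance at least $d$.
   Context: $[q]=\{0,\dots,q-1\}$; the Hamming distance of two words is the number of coordinates in which they differ; the minimum distance of a code is the minimum Hamming distance between distinct codewords. *)

theory Defs
  imports Main "HOL-Library.FuncSet"
begin

text \<open>Words of length n over the alphabet [q] = {0..q-1}: extensional functions
  on the coordinate set {0..<n} with values in {0..<q}.\<close>
definition words :: "nat \<Rightarrow> nat \<Rightarrow> (nat \<Rightarrow> nat) set" where
  "words q n = PiE {0..<n} (\<lambda>_. {0..<q})"

definition hamming_dist :: "nat \<Rightarrow> (nat \<Rightarrow> nat) \<Rightarrow> (nat \<Rightarrow> nat) \<Rightarrow> nat" where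
  "hamming_dist n x y = card {i \<in> {0..<n}. x i \<noteq> y i}"

definition min_dist_ge :: "nat \<Rightarrow> (nat \<Rightarrow> nat) set \<Rightarrow> nat \<Rightarrow> bool" where
  "min_dist_ge n C d \<longleftrightarrow> (\<forall>x\<in>C. \<forall>y\<in>C. x \<noteq> y \<longrightarrow> hamming_dist n x y \<ge> d)"

end

theory Submission imports Defs begin

definition agr :: "nat set \<Rightarrow> (nat\<Rightarrow>nat) \<Rightarrow> (nat\<Rightarrow>nat) \<Rightarrow> nat" where
  "agr J x y = card {j\<in>J. x j = y j}"
definition cnt :: "(nat\<Rightarrow>nat) set \<Rightarrow> nat \<Rightarrow> nat \<Rightarrow> nat" where
  "cnt D j b = card {x\<in>D. x j = b}"

lemma card_filter_sum: "finite A \<Longrightarrow> card {x\<in>A. P x} = (\<Sum>x\<in>A. if P x then 1 else 0)"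
  using sum.inter_filter[of A "\<lambda>_. 1::nat" P] by simp

lemma row_sum:
  assumes "finite D" "finite J"
  shows "(\<Sum>y\<in>D. agr J x y) = (\<Sum>j\<in>J. cnt D j (x j))"
proof -
  have "(\<Sum>y\<in>D. agr J x y) = (\<Sum>y\<in>D. \<Sum>j\<in>J. if x j = y j then 1 else 0)"
    using assms by (simp add: agr_def card_filter_sum)
  also have "\<dots> = (\<Sum>j\<in>J. \<Sum>y\<in>D. if x j = y j then 1 else 0)"
    by (rule sum.swap)
  also have "\<dots> = (\<Sum>j\<in>J. cnt D j (x j))"
    using assms by (simp add: cnt_def card_filter_sum eq_commute)
  finally show ?thesis .
qed

lemma group_sum:
  fixes g :: "(nat\<Rightarrow>nat) \<Rightarrow> 'b::comm_monoid_add"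
  assumes "finite D" "\<forall>x\<in>D. x j < q"
  shows "(\<Sum>x\<in>D. g x) = (\<Sum>b\<in>{0..<q}. \<Sum>x\<in>{x\<in>D. x j = b}. g x)"
proof -
  have "(\<lambda>x. x j) ` D \<subseteq> {0..<q}" using assms by auto
  from sum.group[OF assms(1) _ this, of g] show ?thesis by simp
qed

lemma words_lt: "x \<in> words q n \<Longrightarrow> j < n \<Longrightarrow> x j < q"
  by (auto simp: words_def PiE_iff)

lemma words_fin: "finite (words q n)"
  by (simp add: words_def finite_PiE)

lemma cnt_sum:
  assumes "finite D" "\<forall>x\<in>D. x j < q"
  shows "(\<Sum>b\<in>{0..<q}. cnt D j b) = card D"
  using group_sum[OF assms, of "\<lambda>_. 1::nat"] by (simp add: cnt_def)

lemma cnt_sq: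
  assumes "finite D" "\<forall>x\<in>D. x j < q"
  shows "(\<Sum>x\<in>D. cnt D j (x j)) = (\<Sum>b\<in>{0..<q}. cnt D j b ^ 2)"
proof -
  have "(\<Sum>x\<in>D. cnt D j (x j)) = (\<Sum>b\<in>{0..<q}. \<Sum>x\<in>{x\<in>D. x j = b}. cnt D j (x j))"
    by (rule group_sum[OF assms])
  also have "\<dots> = (\<Sum>b\<in>{0..<q}. \<Sum>x\<in>{x\<in>D. x j = b}. cnt D j b)"
    by (intro sum.cong) auto
  also have "\<dots> = (\<Sum>b\<in>{0..<q}. cnt D j b ^ 2)"
    by (simp add: cnt_def power2_eq_square)
  finally show ?thesis .
qed

lemma hd_agr: "hamming_dist n x y + agr {0..<n} x y = n"
proof -
  have "hamming_dist n x y + agr {0..<n} x y = (\<Sum>i\<in>{0..<n}. (if x i \<noteq> y i then 1 else 0) + (if x i = y i then 1 else 0))"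
    by (simp only: hamming_dist_def agr_def card_filter_sum[OF finite_atLeastLessThan] sum.distrib)
  also have "\<dots> = (\<Sum>i\<in>{0..<n}. 1)" by (intro sum.cong) auto
  finally show ?thesis by simp
qed

lemma agr_split:
  assumes "i < n" "x i = y i"
  shows "agr {0..<n} x y = agr ({0..<n}-{i}) x y + 1"
proof -
  have "{j\<in>{0..<n}. x j = y j} = insert i {j\<in>{0..<n}-{i}. x j = y j}" using assms by auto
  thus ?thesis by (simp add: agr_def)
qed

lemma hd_sym: "hamming_dist n x y = hamming_dist n y x"
  unfolding hamming_dist_def by (intro arg_cong[where f=card] Collect_cong) auto


context
  fixes q n d :: nat and C :: "(nat\<Rightarrow>nat) set"
  assumes q2: "q \<ge> 2" and n0: "n > 0" and d0: "d > 0" and qd: "q*d = (q-1)*n"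
    and Cw: "C \<subseteq> words q n" and cardC: "card C = q*n - 1" and md: "min_dist_ge n C d"
begin

lemma finC: "finite C" using Cw words_fin finite_subset by blast

lemma Clt: "x \<in> C \<Longrightarrow> j < n \<Longrightarrow> x j < q"
  using Cw words_lt by blast

lemma qdn: "q*d + n = q*n"
proof -
  have "q = (q-1) + 1" using q2 by simp
  hence "q*n = (q-1)*n + n" by (metis add_mult_distrib mult_1)
  thus ?thesis using qd by simp
qed

lemma pair:
  assumes "x \<in> C" "y \<in> C" "x \<noteq> y" "i < n" "x i = y i"
  shows "q * agr ({0..<n}-{i}) x y + q \<le> n"
proof -
  have h: "hamming_dist n x y \<ge> d" using md assms unfolding min_dist_ge_def by blast
  have e: "hamming_dist n x y + agr ({0..<n}-{i}) x y + 1 = n"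
    using hd_agr[of n x y] agr_split[of i n x y, OF assms(4,5)] by simp
  have "q*d \<le> q * hamming_dist n x y" using h by simp
  moreover have "q * hamming_dist n x y + q * agr ({0..<n}-{i}) x y + q = q*n"
    using arg_cong[OF e, of "\<lambda>t. q*t"] by (simp add: algebra_simps)
  ultimately show ?thesis using qdn by linarith
qed

lemma S_eq:
  assumes "D \<subseteq> C" "J \<subseteq> {0..<n}"
  shows "(\<Sum>x\<in>D. \<Sum>y\<in>D. agr J x y) = (\<Sum>j\<in>J. \<Sum>b\<in>{0..<q}. cnt D j b ^ 2)"
proof -
  have fD: "finite D" using assms finC finite_subset by blast
  have fJ: "finite J" using assms finite_subset by blast
  have "(\<Sum>x\<in>D. \<Sum>y\<in>D. agr J x y) = (\<Sum>x\<in>D. \<Sum>j\<in>J. cnt D j (x j))"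
    using row_sum[OF fD fJ] by simp
  also have "\<dots> = (\<Sum>j\<in>J. \<Sum>x\<in>D. cnt D j (x j))" by (rule sum.swap)
  also have "\<dots> = (\<Sum>j\<in>J. \<Sum>b\<in>{0..<q}. cnt D j b ^ 2)"
  proof (intro sum.cong refl)
    fix j assume "j \<in> J"
    hence "j < n" using assms by auto
    hence "\<forall>x\<in>D. x j < q" using assms(1) Clt by auto
    thus "(\<Sum>x\<in>D. cnt D j (x j)) = (\<Sum>b\<in>{0..<q}. cnt D j b ^ 2)" by (rule cnt_sq[OF fD])
  qed
  finally show ?thesis .
qed

lemma sq_id:
  assumes "D \<subseteq> C" "j < n"
  shows "(\<Sum>b\<in>{0..<q}. (int q * int (cnt D j b) - int (card D))^2)
        = int q ^ 2 * (\<Sum>b\<in>{0..<q}. int (cnt D j b) ^ 2) - int q * int (card D) ^ 2"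
proof -
  have fD: "finite D" using assms finC finite_subset by blast
  have "\<forall>x\<in>D. x j < q" using assms Clt by auto
  from cnt_sum[OF fD this] have cs: "(\<Sum>b\<in>{0..<q}. int (cnt D j b)) = int (card D)"
    by (metis of_nat_sum)
  have "(\<Sum>b\<in>{0..<q}. (int q * int (cnt D j b) - int (card D))^2)
     = (\<Sum>b\<in>{0..<q}. int q ^ 2 * int (cnt D j b) ^ 2 - (2 * int q * int (card D)) * int (cnt D j b) + int (card D) ^ 2)"
    by (intro sum.cong refl) (simp add: power2_eq_square algebra_simps)
  also have "\<dots> = int q ^ 2 * (\<Sum>b\<in>{0..<q}. int (cnt D j b) ^ 2) - (2 * int q * int (card D)) * (\<Sum>b\<in>{0..<q}. int (cnt D j b)) + int q * int (card D) ^ 2"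
    by (simp add: sum.distrib sum_subtractf sum_distrib_left)
  also have "\<dots> = int q ^ 2 * (\<Sum>b\<in>{0..<q}. int (cnt D j b) ^ 2) - int q * int (card D) ^ 2"
    unfolding cs by (simp add: power2_eq_square algebra_simps)
  finally show ?thesis .
qed


lemma row_bound:
  assumes "i < n" "D \<subseteq> {x\<in>C. x i = c}" "x \<in> D"
  shows "int q * int (\<Sum>y\<in>D. agr ({0..<n}-{i}) x y) \<le> int q * (int n - 1) + (int (card D) - 1) * (int n - int q)"
proof -
  define J where "J = {0..<n}-{i}"
  have fD: "finite D" using finite_subset[OF assms(2)] finC by simp
  have s1: "(\<Sum>y\<in>D. agr J x y) = agr J x x + (\<Sum>y\<in>D-{x}. agr J x y)"
    using sum.remove[OF fD assms(3)] by simp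
  have cJ: "card J = n - 1" using assms(1) by (simp add: J_def)
  have "agr J x x = card J" unfolding agr_def by simp
  hence s2: "agr J x x = n - 1" using cJ by simp
  have s3: "(\<Sum>y\<in>D-{x}. int q * int (agr J x y)) \<le> (\<Sum>y\<in>D-{x}. int n - int q)"
  proof (rule sum_mono)
    fix y assume y: "y \<in> D - {x}"
    have "q * agr J x y + q \<le> n" unfolding J_def
      using pair[of x y i] assms y by auto
    hence "int (q * agr J x y + q) \<le> int n" by (simp only: of_nat_le_iff)
    thus "int q * int (agr J x y) \<le> int n - int q" by simp
  qed
  have cD: "0 < card D" using fD assms(3) card_gt_0_iff by blast
  have s4: "(\<Sum>y\<in>D-{x}. int n - int q) = (int (card D) - 1) * (int n - int q)"
    using cD fD assms(3) by (simp add: card_Diff_singleton of_nat_diff)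
  have "int q * int (\<Sum>y\<in>D. agr J x y) = int q * (int n - 1) + (\<Sum>y\<in>D-{x}. int q * int (agr J x y))"
    using s1 s2 n0 by (simp add: sum_distrib_left of_nat_diff algebra_simps)
  also have "\<dots> \<le> int q * (int n - 1) + (int (card D) - 1) * (int n - int q)" using s3 s4 by linarith
  finally show ?thesis unfolding J_def .
qed

lemma sum_bound:
  assumes "i < n" "D \<subseteq> {x\<in>C. x i = c}"
  shows "int q * int (\<Sum>x\<in>D. \<Sum>y\<in>D. agr ({0..<n}-{i}) x y) \<le> int (card D) * (int q * (int n - 1) + (int (card D) - 1) * (int n - int q))"
proof -
  have "int q * int (\<Sum>x\<in>D. \<Sum>y\<in>D. agr ({0..<n}-{i}) x y) = (\<Sum>x\<in>D. int q * int (\<Sum>y\<in>D. agr ({0..<n}-{i}) x y))"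
    by (simp add: sum_distrib_left)
  also have "\<dots> \<le> (\<Sum>x\<in>D. int q * (int n - 1) + (int (card D) - 1) * (int n - int q))"
    by (rule sum_mono) (rule row_bound[OF assms])
  also have "\<dots> = int (card D) * (int q * (int n - 1) + (int (card D) - 1) * (int n - int q))" by simp
  finally show ?thesis .
qed

lemma key:
  assumes "i < n" "D \<subseteq> {x\<in>C. x i = c}"
  shows "(\<Sum>j\<in>{0..<n}-{i}. \<Sum>b\<in>{0..<q}. (int q * int (cnt D j b) - int (card D))^2)
     \<le> int q * int (card D) * (int q - 1) * (int n - int (card D))"
proof -
  define J where "J = {0..<n}-{i}"
  define K where "K = int (card D)"
  have DC: "D \<subseteq> C" using assms by auto
  have "(\<Sum>j\<in>J. \<Sum>b\<in>{0..<q}. (int q * int (cnt D j b) - K)^2)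
      = (\<Sum>j\<in>J. int q ^ 2 * (\<Sum>b\<in>{0..<q}. int (cnt D j b) ^ 2) - int q * K ^ 2)"
    unfolding K_def by (intro sum.cong refl sq_id[OF DC]) (auto simp: J_def)
  also have "\<dots> = int q ^ 2 * (\<Sum>j\<in>J. \<Sum>b\<in>{0..<q}. int (cnt D j b) ^ 2) - int (card J) * (int q * K ^ 2)"
    by (simp add: sum_subtractf sum_distrib_left)
  also have "(\<Sum>j\<in>J. \<Sum>b\<in>{0..<q}. int (cnt D j b) ^ 2) = int (\<Sum>x\<in>D. \<Sum>y\<in>D. agr J x y)"
    using S_eq[OF DC, of J] unfolding J_def by (simp add: of_nat_sum)
  also have "int (card J) = int n - 1" using assms(1) n0 by (simp add: J_def of_nat_diff)
  finally have eq: "(\<Sum>j\<in>J. \<Sum>b\<in>{0..<q}. (int q * int (cnt D j b) - K)^2)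
      = int q * (int q * int (\<Sum>x\<in>D. \<Sum>y\<in>D. agr J x y)) - (int n - 1) * (int q * K ^ 2)"
    by (simp add: power2_eq_square algebra_simps)
  have "int q * (int q * int (\<Sum>x\<in>D. \<Sum>y\<in>D. agr J x y)) \<le> int q * (K * (int q * (int n - 1) + (K - 1) * (int n - int q)))"
    using sum_bound[OF assms] unfolding J_def K_def by (intro mult_left_mono) auto
  hence "(\<Sum>j\<in>J. \<Sum>b\<in>{0..<q}. (int q * int (cnt D j b) - K)^2)
     \<le> int q * (K * (int q * (int n - 1) + (K - 1) * (int n - int q))) - (int n - 1) * (int q * K ^ 2)"
    unfolding eq by linarith
  also have "\<dots> = int q * K * (int q - 1) * (int n - K)" by (simp add: power2_eq_square algebra_simps)
  finally show ?thesis unfolding J_def K_def .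
qed


lemma cnt_le:
  assumes "i < n" shows "cnt C i c \<le> n"
proof (rule ccontr)
  define D where "D = {x\<in>C. x i = c}"
  assume "\<not> cnt C i c \<le> n"
  hence K: "int (card D) > int n" by (simp add: D_def cnt_def)
  have "0 \<le> (\<Sum>j\<in>{0..<n}-{i}. \<Sum>b\<in>{0..<q}. (int q * int (cnt D j b) - int (card D))^2)"
    by (intro sum_nonneg) auto
  also have "\<dots> \<le> int q * int (card D) * (int q - 1) * (int n - int (card D))"
    using key[OF assms, of D c] by (simp add: D_def)
  also have "\<dots> < 0"
  proof (rule mult_pos_neg)
    show "0 < int q * int (card D) * (int q - 1)" using q2 K n0 by simp
    show "int n - int (card D) < 0" using K by simp
  qed
  finally show False by simp
qed

lemma full:
  assumes "i < n" "cnt C i c = n" "j < n" "j \<noteq> i" "b < q"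
  shows "int q * int (cnt {x\<in>C. x i = c} j b) = int n"
proof -
  define D where "D = {x\<in>C. x i = c}"
  have cD: "card D = n" using assms(2) by (simp add: D_def cnt_def)
  have "(\<Sum>j\<in>{0..<n}-{i}. \<Sum>b\<in>{0..<q}. (int q * int (cnt D j b) - int (card D))^2) \<le> 0"
    using key[OF assms(1), of D c] cD by (simp add: D_def)
  hence "(\<Sum>j\<in>{0..<n}-{i}. \<Sum>b\<in>{0..<q}. (int q * int (cnt D j b) - int (card D))^2) = 0"
    by (meson antisym sum_nonneg zero_le_power2)
  hence "\<forall>j\<in>{0..<n}-{i}. (\<Sum>b\<in>{0..<q}. (int q * int (cnt D j b) - int (card D))^2) = 0"
    by (subst (asm) sum_nonneg_eq_0_iff) (auto intro: sum_nonneg)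
  hence "(\<Sum>b\<in>{0..<q}. (int q * int (cnt D j b) - int (card D))^2) = 0" using assms by auto
  hence "\<forall>b\<in>{0..<q}. (int q * int (cnt D j b) - int (card D))^2 = 0"
    by (subst (asm) sum_nonneg_eq_0_iff) auto
  hence "(int q * int (cnt D j b) - int (card D))^2 = 0" using assms by auto
  thus ?thesis using cD by (simp add: D_def)
qed

lemma col:
  assumes "i < n"
  shows "\<exists>a<q. cnt C i a = n - 1 \<and> (\<forall>b<q. b \<noteq> a \<longrightarrow> cnt C i b = n)"
proof -
  have cs: "(\<Sum>b\<in>{0..<q}. cnt C i b) = q*n - 1"
    using cnt_sum[OF finC, of i q] Clt assms cardC by auto
  have "q*1 \<le> q*n" using n0 by (intro mult_le_mono2) simp
  hence qn: "q*n \<ge> 2" using q2 by linarith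
  have "\<exists>a<q. cnt C i a \<noteq> n"
  proof (rule ccontr)
    assume "\<not> (\<exists>a<q. cnt C i a \<noteq> n)"
    hence "\<forall>b\<in>{0..<q}. cnt C i b = n" by auto
    hence "(\<Sum>b\<in>{0..<q}. cnt C i b) = q*n" by simp
    thus False using cs qn by simp
  qed
  then obtain a where a: "a < q" "cnt C i a \<noteq> n" by blast
  have le: "\<And>b. cnt C i b \<le> n" using cnt_le[OF assms] by blast
  have "(\<Sum>b\<in>{0..<q}. n - cnt C i b) = (\<Sum>b\<in>{0..<q}. n) - (\<Sum>b\<in>{0..<q}. cnt C i b)"
    by (rule sum_subtractf_nat) (simp add: le)
  hence s1: "(\<Sum>b\<in>{0..<q}. n - cnt C i b) = 1" using cs qn by simp
  have "(\<Sum>b\<in>{0..<q}. n - cnt C i b) = (n - cnt C i a) + (\<Sum>b\<in>{0..<q}-{a}. n - cnt C i b)"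
    using sum.remove[of "{0..<q}" a] a by simp
  moreover have "n - cnt C i a \<ge> 1" using a le[of a] by linarith
  ultimately have r: "(\<Sum>b\<in>{0..<q}-{a}. n - cnt C i b) = 0" and ra: "n - cnt C i a = 1" using s1 by linarith+
  from r have "\<forall>b\<in>{0..<q}-{a}. n - cnt C i b = 0" by simp
  hence "\<forall>b<q. b \<noteq> a \<longrightarrow> cnt C i b = n" using le by (metis atLeastLessThan_iff diff_is_0_eq le_antisym zero_le insert_Diff_single insertE Diff_iff singletonD)
  moreover have "cnt C i a = n - 1" using ra le[of a] by linarith
  ultimately show ?thesis using a by blast
qed

lemma sub_cnt:
  assumes "i < n" "j < n" "j \<noteq> i" "b < q" "a < q"
    and ca: "\<forall>c<q. c \<noteq> a \<longrightarrow> cnt C i c = n"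
  shows "int q * int (cnt {x\<in>C. x i = a} j b) = int q * int (cnt C j b) - (int q - 1) * int n"
proof -
  have fB: "finite {x\<in>C. x j = b}" using finC by simp
  have "(\<Sum>x\<in>{x\<in>C. x j = b}. (1::nat)) = (\<Sum>c\<in>{0..<q}. \<Sum>x\<in>{x\<in>{x\<in>C. x j = b}. x i = c}. 1)"
    by (rule group_sum[OF fB]) (use Clt assms in auto)
  hence "cnt C j b = (\<Sum>c\<in>{0..<q}. card {x\<in>{x\<in>C. x j = b}. x i = c})"
    unfolding cnt_def by simp
  also have "\<dots> = (\<Sum>c\<in>{0..<q}. cnt {x\<in>C. x i = c} j b)"
    unfolding cnt_def by (intro sum.cong refl arg_cong[where f=card]) auto
  finally have e1: "int (cnt C j b) = (\<Sum>c\<in>{0..<q}. int (cnt {x\<in>C. x i = c} j b))" by simp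
  also have "\<dots> = int (cnt {x\<in>C. x i = a} j b) + (\<Sum>c\<in>{0..<q}-{a}. int (cnt {x\<in>C. x i = c} j b))"
    using sum.remove[of "{0..<q}" a] assms by simp
  finally have e2: "int q * int (cnt C j b) = int q * int (cnt {x\<in>C. x i = a} j b) + (\<Sum>c\<in>{0..<q}-{a}. int q * int (cnt {x\<in>C. x i = c} j b))"
    by (simp add: algebra_simps sum_distrib_left)
  have "(\<Sum>c\<in>{0..<q}-{a}. int q * int (cnt {x\<in>C. x i = c} j b)) = (\<Sum>c\<in>{0..<q}-{a}. int n)"
    by (intro sum.cong refl full) (use assms ca in auto)
  also have "\<dots> = (int q - 1) * int n" using assms by (simp add: of_nat_diff)
  finally show ?thesis using e2 by linarith
qed


lemma final:
  assumes u: "\<forall>j<n. u j < q \<and> cnt C j (u j) = n-1 \<and> (\<forall>b<q. b \<noteq> u j \<longrightarrow> cnt C j b = n)"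
    and z: "z \<in> C" "i < n" "z i = u i"
  shows "hamming_dist n z u = d"
proof -
  define a where "a = u i"
  define J where "J = {0..<n}-{i}"
  define D where "D = {x\<in>C. x i = a}"
  have cD: "card D = n - 1" using u z(2) by (simp add: D_def a_def cnt_def)
  have zD: "z \<in> D" using z by (simp add: D_def a_def)
  have DC: "D \<subseteq> C" by (auto simp: D_def)
  have fD: "finite D" using DC finC finite_subset by blast
  have fJ: "finite J" by (simp add: J_def)
  have cJ: "card J = n - 1" using z(2) by (simp add: J_def)
  have "0 < card D" using fD zD card_gt_0_iff by blast
  hence n2: "n \<ge> 2" using cD by linarith
  have cntD: "int q * int (cnt D j b) = int n - (if b = u j then int q else 0)" if "j \<in> J" "b < q" for j b
  proof -
    have "int q * int (cnt D j b) = int q * int (cnt C j b) - (int q - 1) * int n"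
      unfolding D_def by (rule sub_cnt) (use that z u in \<open>auto simp: J_def a_def\<close>)
    moreover have "int (cnt C j b) = int n - (if b = u j then 1 else 0)"
      using u that n0 by (auto simp: J_def of_nat_diff)
    hence "int q * int (cnt C j b) = int q * int n - (if b = u j then int q else 0)"
      by (simp add: right_diff_distrib)
    moreover have "(int q - 1) * int n = int q * int n - int n" by (simp add: algebra_simps)
    ultimately show ?thesis by linarith
  qed
  have sqD: "int q * (\<Sum>b\<in>{0..<q}. int (cnt D j b)^2) = int n^2 - 2*int n + int q" if "j \<in> J" for j
  proof -
    have uj: "u j < q" using u that by (auto simp: J_def)
    have "int q * (int q * (\<Sum>b\<in>{0..<q}. int (cnt D j b)^2)) = (\<Sum>b\<in>{0..<q}. (int q * int (cnt D j b))^2)"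
      by (simp add: sum_distrib_left power2_eq_square algebra_simps)
    also have "\<dots> = (\<Sum>b\<in>{0..<q}. (int n - (if b = u j then int q else 0))^2)"
      by (intro sum.cong refl) (simp add: cntD that)
    also have "\<dots> = (int n - int q)^2 + (\<Sum>b\<in>{0..<q}-{u j}. (int n - (if b = u j then int q else 0))^2)"
      by (subst sum.remove[of _ "u j"]) (use uj in auto)
    also have "(\<Sum>b\<in>{0..<q}-{u j}. (int n - (if b = u j then int q else 0))^2) = (\<Sum>b\<in>{0..<q}-{u j}. int n^2)"
      by (intro sum.cong) auto
    also have "\<dots> = (int q - 1) * int n ^ 2" using uj by (simp add: of_nat_diff)
    finally have "int q * (int q * (\<Sum>b\<in>{0..<q}. int (cnt D j b)^2)) = int q * (int n^2 - 2*int n + int q)"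
      by (simp add: power2_eq_square algebra_simps)
    thus ?thesis using q2 by simp
  qed
  have S: "int q * int (\<Sum>x\<in>D. \<Sum>y\<in>D. agr J x y) = (int n - 1)*(int n^2 - 2*int n + int q)"
  proof -
    have "int (\<Sum>x\<in>D. \<Sum>y\<in>D. agr J x y) = (\<Sum>j\<in>J. \<Sum>b\<in>{0..<q}. int (cnt D j b)^2)"
      using S_eq[OF DC, of J] by (simp add: J_def of_nat_sum)
    hence "int q * int (\<Sum>x\<in>D. \<Sum>y\<in>D. agr J x y) = (\<Sum>j\<in>J. int q * (\<Sum>b\<in>{0..<q}. int (cnt D j b)^2))"
      by (simp add: sum_distrib_left)
    also have "\<dots> = (\<Sum>j\<in>J. int n^2 - 2*int n + int q)" by (intro sum.cong refl sqD)
    also have "\<dots> = (int n - 1)*(int n^2 - 2*int n + int q)" using cJ n0 by (simp add: of_nat_diff)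
    finally show ?thesis .
  qed
  have row: "int q * int (\<Sum>y\<in>D. agr J x y) = int q*(int n - 1) + (\<Sum>y\<in>D-{x}. int q * int (agr J x y))" if "x \<in> D" for x
  proof -
    have "(\<Sum>y\<in>D. agr J x y) = agr J x x + (\<Sum>y\<in>D-{x}. agr J x y)"
      using sum.remove[OF fD that] by simp
    moreover have "agr J x x = card J" unfolding agr_def by simp
    hence "agr J x x = n - 1" using cJ by simp
    ultimately show ?thesis using n0 by (simp add: sum_distrib_left of_nat_diff algebra_simps)
  qed
  have inner: "(\<Sum>y\<in>D-{x}. int n - int q - int q * int (agr J x y))
     = (int n - 2)*(int n - int q) - (int q * int (\<Sum>y\<in>D. agr J x y) - int q * (int n - 1))" if "x \<in> D" for x
  proof -
    have "(\<Sum>y\<in>D-{x}. int n - int q - int q * int (agr J x y)) = (\<Sum>y\<in>D-{x}. int n - int q) - (\<Sum>y\<in>D-{x}. int q * int (agr J x y))"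
      by (simp add: sum_subtractf)
    moreover have "(\<Sum>y\<in>D-{x}. int n - int q) = (int n - 2)*(int n - int q)"
      using that fD cD n2 by (simp add: card_Diff_singleton of_nat_diff)
    ultimately show ?thesis using row[OF that] by linarith
  qed
  have Tnn: "0 \<le> (\<Sum>y\<in>D-{x}. int n - int q - int q * int (agr J x y))" if "x \<in> D" for x
  proof (rule sum_nonneg)
    fix y assume y: "y \<in> D - {x}"
    have "q * agr J x y + q \<le> n" unfolding J_def
      using pair[of x y i] that y z(2) by (auto simp: D_def)
    hence "int (q * agr J x y + q) \<le> int n" by (simp only: of_nat_le_iff)
    thus "0 \<le> int n - int q - int q * int (agr J x y)" by simp
  qed
  have "(\<Sum>x\<in>D. \<Sum>y\<in>D-{x}. int n - int q - int q * int (agr J x y))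
      = (\<Sum>x\<in>D. (int n - 2)*(int n - int q) - (int q * int (\<Sum>y\<in>D. agr J x y) - int q * (int n - 1)))"
    by (intro sum.cong refl inner)
  also have "\<dots> = (int n - 1) * ((int n - 2)*(int n - int q) + int q * (int n - 1)) - int q * int (\<Sum>x\<in>D. \<Sum>y\<in>D. agr J x y)"
    using cD n0 by (simp add: sum_subtractf sum.distrib sum_distrib_left of_nat_diff algebra_simps)
  also have "\<dots> = 0" unfolding S by (simp add: power2_eq_square algebra_simps)
  finally have "(\<Sum>x\<in>D. \<Sum>y\<in>D-{x}. int n - int q - int q * int (agr J x y)) = 0" .
  hence "(\<Sum>y\<in>D-{z}. int n - int q - int q * int (agr J z y)) = 0"
  proof -
    from \<open>(\<Sum>x\<in>D. \<Sum>y\<in>D-{x}. int n - int q - int q * int (agr J x y)) = 0\<close>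
    have "\<forall>x\<in>D. (\<Sum>y\<in>D-{x}. int n - int q - int q * int (agr J x y)) = 0"
      by (subst (asm) sum_nonneg_eq_0_iff[OF fD]) (use Tnn in auto)
    thus ?thesis using zD by blast
  qed
  hence rz: "int q * int (\<Sum>y\<in>D. agr J z y) = int q * (int n - 1) + (int n - 2)*(int n - int q)"
    using inner[OF zD] by linarith
  have "int q * int (\<Sum>y\<in>D. agr J z y) = (\<Sum>j\<in>J. int q * int (cnt D j (z j)))"
    using row_sum[OF fD fJ, of z] by (simp add: sum_distrib_left of_nat_sum)
  also have "\<dots> = (\<Sum>j\<in>J. int n - (if z j = u j then int q else 0))"
    by (intro sum.cong refl cntD) (use z Clt in \<open>auto simp: J_def\<close>)
  also have "\<dots> = (int n - 1) * int n - int q * int (agr J z u)"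
  proof -
    have "(\<Sum>j\<in>J. (if z j = u j then int q else 0)) = int q * int (agr J z u)"
      using fJ by (simp add: agr_def card_filter_sum of_nat_sum sum_distrib_left if_distrib cong: if_cong)
    thus ?thesis using cJ n0 by (simp add: sum_subtractf of_nat_diff)
  qed
  finally have az: "int q * int (agr J z u) = int n - int q"
    using rz by (simp add: algebra_simps)
  have "hamming_dist n z u + agr J z u + 1 = n"
    using hd_agr[of n z u] agr_split[of i n z u, OF z(2,3)] by (simp add: J_def)
  hence "int q * int (hamming_dist n z u + agr J z u + 1) = int q * int n" by simp
  hence "int q * int (hamming_dist n z u) + int q * int (agr J z u) + int q = int q * int n"
    by (simp add: algebra_simps)
  hence "int q * int (hamming_dist n z u) = int q * int n - int n" using az by linarith
  also have "\<dots> = int q * int d" using qdn by (metis of_nat_add of_nat_mult add_diff_cancel_right')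
  finally show ?thesis using q2 by simp
qed

end


theorem proposition5p14:
  fixes q n d :: nat and C :: "(nat \<Rightarrow> nat) set"
  assumes "q \<ge> 2" and "n > 0" and "d > 0"
    and "q * d = (q - 1) * n"
    and "C \<subseteq> words q n"
    and "card C = q * n - 1"
    and "min_dist_ge n C d"
  shows "\<exists>u \<in> words q n - C. min_dist_ge n (insert u C) d"
proof -
  define P where "P = (\<lambda>j a. a < q \<and> cnt C j a = n-1 \<and> (\<forall>b<q. b \<noteq> a \<longrightarrow> cnt C j b = n))"
  define u where "u = (\<lambda>j. if j < n then (SOME a. P j a) else undefined)"
  have up: "\<forall>j<n. u j < q \<and> cnt C j (u j) = n-1 \<and> (\<forall>b<q. b \<noteq> u j \<longrightarrow> cnt C j b = n)"
  proof (intro allI impI)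
    fix j assume j: "j < n"
    have "\<exists>a. P j a" using col[OF assms j] by (auto simp: P_def)
    hence "P j (u j)" using j unfolding u_def by (simp add: someI_ex)
    thus "u j < q \<and> cnt C j (u j) = n-1 \<and> (\<forall>b<q. b \<noteq> u j \<longrightarrow> cnt C j b = n)" by (simp add: P_def)
  qed
  have uw: "u \<in> words q n" using up by (auto simp: words_def PiE_iff extensional_def u_def)
  have "q*d \<le> q*n" using qdn[OF assms] by linarith
  hence dn: "d \<le> n" using assms(1) by simp
  have du: "hamming_dist n x u \<ge> d" if x: "x \<in> C" for x
  proof (cases "\<exists>i<n. x i = u i")
    case True
    then obtain i where "i < n" "x i = u i" by blast
    thus ?thesis using final[OF assms up x] by simp
  next
    case False
    hence "{i\<in>{0..<n}. x i \<noteq> u i} = {0..<n}" by auto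
    thus ?thesis using dn by (simp add: hamming_dist_def)
  qed
  have uC: "u \<notin> C"
  proof
    assume "u \<in> C"
    hence "hamming_dist n u u = d" using final[OF assms up, of u 0] assms(2) by simp
    thus False using assms(3) by (simp add: hamming_dist_def)
  qed
  have "min_dist_ge n (insert u C) d"
    using assms(7) du hd_sym unfolding min_dist_ge_def by (metis insert_iff)
  thus ?thesis using uw uC by blast
qed

end
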